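(* Let $(\Gamma(-),X)$ be a connected graph of groups with fundamental group $\Gamma$, and suppose that $X$ has only finitely many vertices. Then there exist a graph of groups $(\Delta(-),Y)$ with $|V(Y)|<\infty$ and a spanning tree $T$ in $Y$ such that $\pi_1(\Delta(-),Y)\cong\Gamma$ and \[ \Delta(e)^e\neq\Delta(t(e))\quad\text{and}\quad \Delta(e)^{\bar e}\neq \Delta(o(e))\qquad\text{for all } e\in E(T). \] Moreover, if $(\Gamma(-),X)$ satisfies the finiteness condition $(F_1)$: $X$ is a finite graph, or the finiteness condition $(F_2)$: $\Gamma(v)$ is finite for every vertex $v\in V(X)$, then $(\Delta(-),Y)$ may be chosen so as to enjoy the same property.
   Context: Graphs are in the sense of Serre: a graph $X$ consists of a vertex set $V(X)$, a set $E(X)$ of directed edges with a fixed-point-free involution $e\mapsto\bar e$, and maps $o,t:E(X)\to V(X)$ (origin, terminus) with $t(\bar e)=o(e)$; loops and multiple edges are allowed. A graph of groups $(\Gamma(-),X)$ assigns to each vertex $v$ a group $\Gamma(v)$ and to each edge $e$ a group $\Gamma(e)$ with $\Gamma(\bar e)=\Gamma(e)$, together with monomorphisms $\Gamma(e)\to\Gamma(t(e))$, $a\mapsto a^e$; for $a\in\Gamma(e)$, $a^{\bar e}\in\Gamma(o(e))$ denotes the image under the monomorphism attached to $\bar e$. We write $\Gamma(e)^e$ and $\Gamma(e)^{\bar e}$ for the images of $\Gamma(e)$ in $\Gamma(t(e))$ and $\Gamma(o(e))$. $\pi_1(\Gamma(-),X)$ denotes the fundamental group of the graph of groups (Bass–Serre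 theory). *)

theory Defs
  imports "HOL-Algebra.Group"
begin

record ('v, 'e, 'g) graph_of_groups =
  verts :: "'v set"
  edges :: "'e set"
  rev   :: "'e \<Rightarrow> 'e"
  src   :: "'e \<Rightarrow> 'v"
  tgt   :: "'e \<Rightarrow> 'v"
  vgrp  :: "'v \<Rightarrow> 'g monoid"
  egrp  :: "'e \<Rightarrow> 'g monoid"
  emb   :: "'e \<Rightarrow> 'g \<Rightarrow> 'g"    (* a |-> a^e : Gamma(e) -> Gamma(t(e)) *)

definition is_graph_of_groups :: "('v, 'e, 'g) graph_of_groups \<Rightarrow> bool" where
  "is_graph_of_groups X \<longleftrightarrow>
     (\<forall>e\<in>edges X.
        rev X e \<in> edges X \<and> rev X e \<noteq> e \<and> rev X (rev X e) = e \<and>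
        src X e \<in> verts X \<and> tgt X e \<in> verts X \<and> tgt X (rev X e) = src X e \<and>
        group (egrp X e) \<and> egrp X (rev X e) = egrp X e \<and>
        emb X e \<in> hom (egrp X e) (vgrp X (tgt X e)) \<and>
        inj_on (emb X e) (carrier (egrp X e))) \<and>
     (\<forall>v\<in>verts X. group (vgrp X v))"

fun is_path :: "('v, 'e, 'g) graph_of_groups \<Rightarrow> 'e set \<Rightarrow> 'v \<Rightarrow> 'e list \<Rightarrow> 'v \<Rightarrow> bool" where
  "is_path X S u [] w \<longleftrightarrow> u = w \<and> u \<in> verts X"
| "is_path X S u (e # es) w \<longleftrightarrow> e \<in> S \<and> src X e = u \<and> is_path X S (tgt X e) es w"

definition reduced_path :: "('v, 'e, 'g) graph_of_groups \<Rightarrow> 'e list \<Rightarrow> bool" where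
  "reduced_path X es \<longleftrightarrow> successively (\<lambda>a b. b \<noteq> rev X a) es"

definition connected_gog :: "('v, 'e, 'g) graph_of_groups \<Rightarrow> bool" where
  "connected_gog X \<longleftrightarrow> verts X \<noteq> {} \<and>
     (\<forall>u\<in>verts X. \<forall>w\<in>verts X. \<exists>es. is_path X (edges X) u es w)"

definition spanning_tree :: "('v, 'e, 'g) graph_of_groups \<Rightarrow> 'e set \<Rightarrow> bool" where
  "spanning_tree X T \<longleftrightarrow> T \<subseteq> edges X \<and> (\<forall>e\<in>T. rev X e \<in> T) \<and>
     verts X \<noteq> {} \<and>
     (\<forall>u\<in>verts X. \<forall>w\<in>verts X. \<exists>es. is_path X T u es w) \<and>
     \<not> (\<exists>v es. es \<noteq> [] \<and> is_path X T v es v \<and> reduced_path X es)"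

datatype ('v, 'e, 'g) letter = VL 'v 'g | EL 'e

definition valid_letter :: "('v, 'e, 'g) graph_of_groups \<Rightarrow> ('v, 'e, 'g) letter \<Rightarrow> bool" where
  "valid_letter X l = (case l of VL v g \<Rightarrow> v \<in> verts X \<and> g \<in> carrier (vgrp X v)
                                | EL e \<Rightarrow> e \<in> edges X)"

definition valid_word :: "('v, 'e, 'g) graph_of_groups \<Rightarrow> ('v, 'e, 'g) letter list \<Rightarrow> bool" where
  "valid_word X w \<longleftrightarrow> (\<forall>l\<in>set w. valid_letter X l)"

inductive fg_rel :: "('v, 'e, 'g) graph_of_groups \<Rightarrow> 'e set \<Rightarrow>
     ('v, 'e, 'g) letter list \<Rightarrow> ('v, 'e, 'g) letter list \<Rightarrow> bool"
  for X T where
  vmult: "\<lbrakk>v \<in> verts X; g \<in> carrier (vgrp X v); h \<in> carrier (vgrp X v)\<rbrakk>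
            \<Longrightarrow> fg_rel X T [VL v g, VL v h] [VL v (g \<otimes>\<^bsub>vgrp X v\<^esub> h)]"
| vone: "v \<in> verts X \<Longrightarrow> fg_rel X T [VL v \<one>\<^bsub>vgrp X v\<^esub>] []"
| einv: "e \<in> edges X \<Longrightarrow> fg_rel X T [EL e, EL (rev X e)] []"
| econj: "\<lbrakk>e \<in> edges X; a \<in> carrier (egrp X e)\<rbrakk>
            \<Longrightarrow> fg_rel X T [EL e, VL (tgt X e) (emb X e a), EL (rev X e)]
                           [VL (src X e) (emb X (rev X e) a)]"
| etree: "e \<in> T \<Longrightarrow> fg_rel X T [EL e] []"

inductive fg_eq :: "('v, 'e, 'g) graph_of_groups \<Rightarrow> 'e set \<Rightarrow>
     ('v, 'e, 'g) letter list \<Rightarrow> ('v, 'e, 'g) letter list \<Rightarrow> bool"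
  for X T where
  refl: "valid_word X w \<Longrightarrow> fg_eq X T w w"
| sym: "fg_eq X T a b \<Longrightarrow> fg_eq X T b a"
| trans: "\<lbrakk>fg_eq X T a b; fg_eq X T b c\<rbrakk> \<Longrightarrow> fg_eq X T a c"
| rel: "\<lbrakk>fg_rel X T a b; valid_word X u; valid_word X w\<rbrakk>
          \<Longrightarrow> fg_eq X T (u @ a @ w) (u @ b @ w)"

definition fund_group :: "('v, 'e, 'g) graph_of_groups \<Rightarrow> 'e set \<Rightarrow>
     ('v, 'e, 'g) letter list set monoid" where
  "fund_group X T =
     \<lparr> carrier = {{w'. fg_eq X T w w'} | w. valid_word X w},
       mult = (\<lambda>A B. {w. \<exists>a\<in>A. \<exists>b\<in>B. fg_eq X T (a @ b) w}),
       one = {w. fg_eq X T [] w} \<rparr>"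

definition F1 :: "('v, 'e, 'g) graph_of_groups \<Rightarrow> bool" where
  "F1 X \<longleftrightarrow> finite (verts X) \<and> finite (edges X)"

definition F2 :: "('v, 'e, 'g) graph_of_groups \<Rightarrow> bool" where
  "F2 X \<longleftrightarrow> (\<forall>v\<in>verts X. finite (carrier (vgrp X v)))"

end

theory Submission
  imports Defs
begin


lemma valid_word_Nil[simp]: "valid_word X []"
  by (simp add: valid_word_def)
lemma valid_word_Cons[simp]: "valid_word X (l # w) \<longleftrightarrow> valid_letter X l \<and> valid_word X w"
  by (simp add: valid_word_def)
lemma valid_word_append[simp]: "valid_word X (u @ w) \<longleftrightarrow> valid_word X u \<and> valid_word X w"
  by (auto simp add: valid_word_def)
lemma valid_letter_simps[simp]:
  "valid_letter X (VL v g) \<longleftrightarrow> v \<in> verts X \<and> g \<in> carrier (vgrp X v)"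
  "valid_letter X (EL e) \<longleftrightarrow> e \<in> edges X"
  by (simp_all add: valid_letter_def)

lemma fg_rel_valid:
  assumes G: "is_graph_of_groups X" and T: "T \<subseteq> edges X" and r: "fg_rel X T a b"
  shows "valid_word X a \<and> valid_word X b"
  using r
proof cases
  case (vmult v g h)
  then show ?thesis using G unfolding is_graph_of_groups_def
    by (auto intro: monoid.m_closed group.is_monoid)
next
  case (vone v)
  then show ?thesis using G unfolding is_graph_of_groups_def
    by (auto intro: monoid.one_closed group.is_monoid)
next
  case (einv e)
  then show ?thesis using G unfolding is_graph_of_groups_def by auto
next
  case (econj e x)
  have A: "\<And>f. f \<in> edges X \<Longrightarrow> rev X f \<in> edges X \<and> src X f \<in> verts X \<and> tgt X f \<in> verts X \<and>
     tgt X (rev X f) = src X f \<and> egrp X (rev X f) = egrp X f \<and> rev X (rev X f) = f \<and>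
     emb X f \<in> hom (egrp X f) (vgrp X (tgt X f))"
    using G unfolding is_graph_of_groups_def by auto
  have "emb X e \<in> hom (egrp X e) (vgrp X (tgt X e))" using A econj by blast
  moreover have "emb X (rev X e) \<in> hom (egrp X e) (vgrp X (src X e))"
    using A[of e] A[of "rev X e"] econj by metis
  ultimately show ?thesis using econj A[of e] by (auto simp: hom_def Pi_def)
next
  case (etree e)
  then show ?thesis using T by auto
qed

lemma fg_eq_valid:
  assumes G: "is_graph_of_groups X" and T: "T \<subseteq> edges X" and r: "fg_eq X T a b"
  shows "valid_word X a \<and> valid_word X b"
  using r by induction (use fg_rel_valid[OF G T] in auto)

lemma fg_eq_cong:
  assumes "fg_eq X T a b" "valid_word X u" "valid_word X w"
  shows "fg_eq X T (u @ a @ w) (u @ b @ w)"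
  using assms
proof (induction arbitrary: u w)
  case (refl w0)
  then show ?case by (intro fg_eq.refl) simp
next
  case (sym a b)
  then show ?case by (blast intro: fg_eq.sym)
next
  case (trans a b c)
  then show ?case by (blast intro: fg_eq.trans)
next
  case (rel a b u0 w0)
  then show ?case using fg_eq.rel[of X T a b "u @ u0" "w0 @ w"] by simp
qed

lemma fg_eq_append:
  assumes G: "is_graph_of_groups X" and T: "T \<subseteq> edges X"
    and "fg_eq X T a a'" "fg_eq X T b b'"
  shows "fg_eq X T (a @ b) (a' @ b')"
proof -
  have v: "valid_word X a'" "valid_word X b"
    using fg_eq_valid[OF G T] assms(3,4) by auto
  have "fg_eq X T ([] @ a @ b) ([] @ a' @ b)" by (rule fg_eq_cong[OF assms(3)]) (use v in auto)
  moreover have "fg_eq X T (a' @ b @ []) (a' @ b' @ [])" by (rule fg_eq_cong[OF assms(4)]) (use v in auto)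
  ultimately show ?thesis by (auto intro: fg_eq.trans)
qed

definition cls where "cls X T w = {w'. fg_eq X T w w'}"

lemma cls_eq:
  assumes "valid_word X w" "valid_word X w'"
  shows "cls X T w = cls X T w' \<longleftrightarrow> fg_eq X T w w'"
proof
  assume "cls X T w = cls X T w'"
  moreover have "w' \<in> cls X T w'" using assms by (simp add: cls_def fg_eq.refl)
  ultimately have "w' \<in> cls X T w" by simp
  then show "fg_eq X T w w'" by (simp add: cls_def)
next
  assume "fg_eq X T w w'"
  then show "cls X T w = cls X T w'"
    unfolding cls_def by (blast intro: fg_eq.sym fg_eq.trans)
qed

lemma carrier_fund: "carrier (fund_group X T) = {cls X T w | w. valid_word X w}"
  by (simp add: fund_group_def cls_def)

lemma mult_cls:
  assumes G: "is_graph_of_groups X" and T: "T \<subseteq> edges X"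
    and v: "valid_word X w0" "valid_word X w1"
  shows "mult (fund_group X T) (cls X T w0) (cls X T w1) = cls X T (w0 @ w1)"
proof -
  have "{w. \<exists>a\<in>cls X T w0. \<exists>b\<in>cls X T w1. fg_eq X T (a @ b) w} = cls X T (w0 @ w1)"
  proof safe
    fix w a b assume "a \<in> cls X T w0" "b \<in> cls X T w1" "fg_eq X T (a @ b) w"
    then show "w \<in> cls X T (w0 @ w1)" unfolding cls_def
      using fg_eq_append[OF G T] by (blast intro: fg_eq.trans)
  next
    fix w assume "w \<in> cls X T (w0 @ w1)"
    moreover have "w0 \<in> cls X T w0" "w1 \<in> cls X T w1"
      using v by (simp_all add: cls_def fg_eq.refl)
    ultimately show "\<exists>a\<in>cls X T w0. \<exists>b\<in>cls X T w1. fg_eq X T (a @ b) w"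
      by (auto simp: cls_def)
  qed
  then show ?thesis by (simp add: fund_group_def)
qed

lemma fg_eq_respects:
  assumes app: "\<And>u w. F (u @ w) = F u @ F w"
    and Fv: "\<And>w. valid_word X w \<Longrightarrow> valid_word Y (F w)"
    and Fr: "\<And>a b. fg_rel X T a b \<Longrightarrow> valid_word X a \<Longrightarrow> valid_word X b \<Longrightarrow> fg_eq Y T' (F a) (F b)"
    and G: "is_graph_of_groups X" and T: "T \<subseteq> edges X"
    and r: "fg_eq X T a b"
  shows "fg_eq Y T' (F a) (F b)"
  using r
proof induction
  case (refl w)
  then show ?case by (intro fg_eq.refl Fv)
next
  case (sym a b)
  then show ?case by (blast intro: fg_eq.sym)
next
  case (trans a b c)
  then show ?case by (blast intro: fg_eq.trans)
next
  case (rel a b u w)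
  then show ?case using fg_rel_valid[OF G T rel(1)]
    by (simp add: app fg_eq_cong Fr Fv)
qed

lemma fund_iso:
  assumes GX: "is_graph_of_groups X" and TX: "T \<subseteq> edges X"
    and GY: "is_graph_of_groups Y" and TY: "T' \<subseteq> edges Y"
    and Fv: "\<And>w. valid_word X w \<Longrightarrow> valid_word Y (F w)"
    and Fr: "\<And>a b. fg_eq X T a b \<Longrightarrow> fg_eq Y T' (F a) (F b)"
    and Fapp: "\<And>u w. F (u @ w) = F u @ F w"
    and Gv: "\<And>w. valid_word Y w \<Longrightarrow> valid_word X (G w)"
    and Gr: "\<And>a b. fg_eq Y T' a b \<Longrightarrow> fg_eq X T (G a) (G b)"
    and GF: "\<And>w. valid_word X w \<Longrightarrow> fg_eq X T (G (F w)) w"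
    and FG: "\<And>w. valid_word Y w \<Longrightarrow> fg_eq Y T' (F (G w)) w"
  shows "fund_group X T \<cong> fund_group Y T'"
proof -
  define h where "h A = {w'. \<exists>w\<in>A. fg_eq Y T' (F w) w'}" for A
  have hc: "h (cls X T w) = cls Y T' (F w)" if "valid_word X w" for w
  proof -
    have "w \<in> cls X T w" using that by (simp add: cls_def fg_eq.refl)
    then show ?thesis unfolding h_def cls_def
      using Fr by (blast intro: fg_eq.trans)
  qed
  have hom: "h \<in> hom (fund_group X T) (fund_group Y T')"
  proof (rule homI)
    fix A assume "A \<in> carrier (fund_group X T)"
    then obtain w where "A = cls X T w" "valid_word X w" by (auto simp: carrier_fund)
    then show "h A \<in> carrier (fund_group Y T')" using hc Fv by (auto simp: carrier_fund)
  next
    fix A B assume "A \<in> carrier (fund_group X T)" "B \<in> carrier (fund_group X T)"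
    then obtain w0 w1 where "A = cls X T w0" "valid_word X w0" "B = cls X T w1" "valid_word X w1"
      by (auto simp: carrier_fund)
    then show "h (A \<otimes>\<^bsub>fund_group X T\<^esub> B) = h A \<otimes>\<^bsub>fund_group Y T'\<^esub> h B"
      by (simp add: mult_cls[OF GX TX] mult_cls[OF GY TY] hc Fv Fapp)
  qed
  have inj: "inj_on h (carrier (fund_group X T))"
  proof (rule inj_onI)
    fix A B assume "A \<in> carrier (fund_group X T)" "B \<in> carrier (fund_group X T)" "h A = h B"
    then obtain w0 w1 where *: "A = cls X T w0" "valid_word X w0" "B = cls X T w1" "valid_word X w1"
      and "cls Y T' (F w0) = cls Y T' (F w1)"
      by (auto simp: carrier_fund hc)
    then have "fg_eq Y T' (F w0) (F w1)" using cls_eq Fv by blast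
    then have "fg_eq X T (G (F w0)) (G (F w1))" by (rule Gr)
    then have "fg_eq X T w0 w1" using GF * by (blast intro: fg_eq.trans fg_eq.sym)
    then show "A = B" using * cls_eq by blast
  qed
  have surj: "h ` carrier (fund_group X T) = carrier (fund_group Y T')"
  proof
    show "h ` carrier (fund_group X T) \<subseteq> carrier (fund_group Y T')"
      using hom by (auto simp: hom_def Pi_def)
  next
    show "carrier (fund_group Y T') \<subseteq> h ` carrier (fund_group X T)"
    proof
      fix C assume "C \<in> carrier (fund_group Y T')"
      then obtain w where w: "C = cls Y T' w" "valid_word Y w" by (auto simp: carrier_fund)
      have "h (cls X T (G w)) = cls Y T' (F (G w))" using hc Gv w by simp
      also have "\<dots> = C" using w cls_eq FG Fv Gv by blast
      finally show "C \<in> h ` carrier (fund_group X T)"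
        using Gv w by (auto simp: carrier_fund intro!: image_eqI[where x="cls X T (G w)"])
    qed
  qed
  show ?thesis
    by (rule is_isoI[of h]) (simp add: iso_def hom bij_betw_def inj surj)
qed



definition rho where "rho X e v = (if v = tgt X e then src X e else v)"
definition phi where "phi X e x = emb X (rev X e) (inv_into (carrier (egrp X e)) (emb X e) x)"
definition contract :: "('v, 'e, 'g) graph_of_groups \<Rightarrow> 'e \<Rightarrow> ('v, 'e, 'g) graph_of_groups" where
  "contract X e = \<lparr>verts = verts X - {tgt X e}, edges = edges X - {e, rev X e}, rev = rev X,
     src = (\<lambda>f. rho X e (src X f)), tgt = (\<lambda>f. rho X e (tgt X f)), vgrp = vgrp X, egrp = egrp X,
     emb = (\<lambda>f. if tgt X f = tgt X e then (\<lambda>x. phi X e (emb X f x)) else emb X f)\<rparr>"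

lemma contract_simps[simp]:
  "verts (contract X e) = verts X - {tgt X e}"
  "edges (contract X e) = edges X - {e, rev X e}"
  "rev (contract X e) = rev X"
  "src (contract X e) f = rho X e (src X f)"
  "tgt (contract X e) f = rho X e (tgt X f)"
  "vgrp (contract X e) = vgrp X"
  "egrp (contract X e) = egrp X"
  "emb (contract X e) f = (if tgt X f = tgt X e then (\<lambda>x. phi X e (emb X f x)) else emb X f)"
  by (simp_all add: contract_def)

fun projl :: "('v, 'e, 'g) graph_of_groups \<Rightarrow> 'e \<Rightarrow> ('v, 'e, 'g) letter \<Rightarrow> ('v, 'e, 'g) letter list" where
  "projl X e (VL v g) = (if v = tgt X e then [VL (src X e) (phi X e g)] else [VL v g])"
| "projl X e (EL f) = (if f = e \<or> f = rev X e then [] else [EL f])"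

definition projw where "projw X e w = concat (map (projl X e) w)"

lemma projw_simps[simp]: "projw X e [] = []" "projw X e (l # w) = projl X e l @ projw X e w"
  "projw X e (u @ w) = projw X e u @ projw X e w"
  by (simp_all add: projw_def)

definition conn where "conn X e x y = (if x = y then [] else if x = src X e then [e] else [rev X e])"

fun lift where
  "lift X e x [] = []"
| "lift X e x (f # fs) = conn X e x (src X f) @ f # lift X e (tgt X f) fs"

lemma is_path_append:
  "is_path X S u p m \<Longrightarrow> is_path X S m q w \<Longrightarrow> is_path X S u (p @ q) w"
  by (induction p arbitrary: u) auto

lemma is_path_end: "is_path X S u p w \<Longrightarrow> w \<in> verts X"
  by (induction p arbitrary: u) auto

lemma fg_rel_eq: "fg_rel X T a b \<Longrightarrow> fg_eq X T a b"
  using fg_eq.rel[of X T a b "[]" "[]"] by simp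

locale contr =
  fixes X :: "('v, 'e, 'g) graph_of_groups" and T :: "'e set" and e :: 'e
  assumes gog: "is_graph_of_groups X" and st: "spanning_tree X T" and eT: "e \<in> T"
    and sur: "emb X e ` carrier (egrp X e) = carrier (vgrp X (tgt X e))"
begin

lemma A: "f \<in> edges X \<Longrightarrow> rev X f \<in> edges X \<and> rev X f \<noteq> f \<and> rev X (rev X f) = f \<and>
     src X f \<in> verts X \<and> tgt X f \<in> verts X \<and> tgt X (rev X f) = src X f \<and>
     group (egrp X f) \<and> egrp X (rev X f) = egrp X f \<and>
     emb X f \<in> hom (egrp X f) (vgrp X (tgt X f)) \<and> inj_on (emb X f) (carrier (egrp X f))"
  using gog unfolding is_graph_of_groups_def by blast

lemma VG: "v \<in> verts X \<Longrightarrow> group (vgrp X v)"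
  using gog unfolding is_graph_of_groups_def by blast

lemma TE: "T \<subseteq> edges X" and Trev: "f \<in> T \<Longrightarrow> rev X f \<in> T"
  using st unfolding spanning_tree_def by auto

lemma eE: "e \<in> edges X" "rev X e \<in> T" "rev X e \<in> edges X"
  using eT TE Trev by auto

lemma src_rev: "f \<in> edges X \<Longrightarrow> src X (rev X f) = tgt X f"
  using A[of f] A[of "rev X f"] by metis

lemma rev_eq_iff: "f \<in> edges X \<Longrightarrow> g \<in> edges X \<Longrightarrow> rev X f = g \<longleftrightarrow> f = rev X g"
  using A by metis

lemma ab: "src X e \<noteq> tgt X e"
proof
  assume h: "src X e = tgt X e"
  have "is_path X T (src X e) [e] (src X e)" using eT A[of e] eE h by simp
  moreover have "reduced_path X [e]" by (simp add: reduced_path_def)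
  ultimately show False using st unfolding spanning_tree_def by blast
qed

abbreviation "X' \<equiv> contract X e"
abbreviation "T' \<equiv> T - {e, rev X e}"

lemma emb_iso: "emb X e \<in> iso (egrp X e) (vgrp X (tgt X e))"
  using A[OF eE(1)] sur by (simp add: iso_iff)

lemma psi_iso: "inv_into (carrier (egrp X e)) (emb X e) \<in> iso (vgrp X (tgt X e)) (egrp X e)"
  using group.iso_set_sym[OF _ emb_iso] A[OF eE(1)] by blast

lemma emb_rev_hom: "emb X (rev X e) \<in> hom (egrp X e) (vgrp X (src X e))"
  and emb_rev_inj: "inj_on (emb X (rev X e)) (carrier (egrp X e))"
  using A[OF eE(1)] A[OF eE(3)] by metis+

lemma phi_hom: "phi X e \<in> hom (vgrp X (tgt X e)) (vgrp X (src X e))"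
proof -
  have p: "inv_into (carrier (egrp X e)) (emb X e) \<in> hom (vgrp X (tgt X e)) (egrp X e)"
    using psi_iso by (simp add: iso_def)
  show ?thesis unfolding phi_def
    using hom_compose[OF p emb_rev_hom]
    by (auto simp: hom_def Pi_def compose_def split: if_splits)
qed

lemma phi_inj: "inj_on (phi X e) (carrier (vgrp X (tgt X e)))"
proof -
  have p: "bij_betw (inv_into (carrier (egrp X e)) (emb X e)) (carrier (vgrp X (tgt X e))) (carrier (egrp X e))"
    using psi_iso by (simp add: iso_def)
  show ?thesis unfolding phi_def
    using comp_inj_on[of "inv_into (carrier (egrp X e)) (emb X e)" "carrier (vgrp X (tgt X e))" "emb X (rev X e)"]
      p emb_rev_inj by (simp add: bij_betw_def o_def)
qed

lemma phi_emb: "z \<in> carrier (egrp X e) \<Longrightarrow> phi X e (emb X e z) = emb X (rev X e) z"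
  unfolding phi_def using A[OF eE(1)] by (simp add: inv_into_f_f)

lemma phi_closed: "g \<in> carrier (vgrp X (tgt X e)) \<Longrightarrow> phi X e g \<in> carrier (vgrp X (src X e))"
  using phi_hom by (auto simp: hom_def Pi_def)

lemma rho_verts: "v \<in> verts X \<Longrightarrow> rho X e v \<in> verts X - {tgt X e}"
  using ab A[OF eE(1)] by (auto simp: rho_def)

lemma gog': "is_graph_of_groups X'"
  unfolding is_graph_of_groups_def
proof (intro conjI ballI)
  fix f assume f: "f \<in> edges X'"
  then have fE: "f \<in> edges X" "f \<noteq> e" "f \<noteq> rev X e" by auto
  note Af = A[OF fE(1)]
  have "rev X f \<noteq> e" "rev X f \<noteq> rev X e"
    using fE rev_eq_iff[OF fE(1) eE(1)] A[OF eE(1)] Af by metis+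
  then show "rev X' f \<in> edges X'" using Af by simp
  show "rev X' f \<noteq> f" "rev X' (rev X' f) = f" using Af by simp_all
  show "src X' f \<in> verts X'" "tgt X' f \<in> verts X'" using rho_verts Af by auto
  show "tgt X' (rev X' f) = src X' f" using Af by simp
  show "group (egrp X' f)" "egrp X' (rev X' f) = egrp X' f" using Af by simp_all
  show "emb X' f \<in> hom (egrp X' f) (vgrp X' (tgt X' f))"
  proof (cases "tgt X f = tgt X e")
    case True
    have "(\<lambda>x. phi X e (emb X f x)) \<in> hom (egrp X f) (vgrp X (src X e))"
      using hom_compose[OF _ phi_hom, of "emb X f" "egrp X f"] Af True
      by (auto simp: hom_def Pi_def compose_def split: if_splits)
    then show ?thesis using True by (simp add: rho_def)
  next
    case False
    then show ?thesis using Af by (simp add: rho_def)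
  qed
  show "inj_on (emb X' f) (carrier (egrp X' f))"
  proof (cases "tgt X f = tgt X e")
    case True
    have cl: "emb X f ` carrier (egrp X f) \<subseteq> carrier (vgrp X (tgt X e))"
      using Af True by (auto simp: hom_def)
    have "inj_on (phi X e \<circ> emb X f) (carrier (egrp X f))"
      using comp_inj_on[of "emb X f" _ "phi X e"] Af inj_on_subset[OF phi_inj cl] by blast
    then show ?thesis using True by (simp add: o_def)
  next
    case False
    then show ?thesis using Af by simp
  qed
next
  fix v assume "v \<in> verts X'"
  then show "group (vgrp X' v)" using VG by simp
qed

end



context contr
begin

lemma rho_ends: "f \<in> edges X \<Longrightarrow> (f = e \<or> f = rev X e) \<Longrightarrow> rho X e (src X f) = rho X e (tgt X f)"
  using A[OF eE(1)] src_rev[OF eE(1)] by (auto simp: rho_def)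

lemma proj_path:
  "is_path X T u es w \<Longrightarrow> is_path X' T' (rho X e u) (filter (\<lambda>f. f \<noteq> e \<and> f \<noteq> rev X e) es) (rho X e w)"
proof (induction es arbitrary: u)
  case Nil
  then show ?case using rho_verts by auto
next
  case (Cons f fs)
  then have f: "f \<in> T" "src X f = u" "is_path X T (tgt X f) fs w" by auto
  have fE: "f \<in> edges X" using f TE by auto
  show ?case
  proof (cases "f = e \<or> f = rev X e")
    case True
    then show ?thesis using Cons.IH[OF f(3)] rho_ends[OF fE True] f by auto
  next
    case False
    then show ?thesis using Cons.IH[OF f(3)] f by auto
  qed
qed

lemma conn_path:
  assumes "x \<in> verts X" "z \<in> verts X" "rho X e x = rho X e z"
  shows "is_path X T x (conn X e x z) z"
proof -
  have Ae: "tgt X (rev X e) = src X e" "src X (rev X e) = tgt X e"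
    using A[OF eE(1)] src_rev[OF eE(1)] by auto
  show ?thesis
  proof (cases "x = z")
    case True then show ?thesis using assms by (simp add: conn_def)
  next
    case False
    then have "(x = src X e \<and> z = tgt X e) \<or> (x = tgt X e \<and> z = src X e)"
      using assms(3) by (auto simp: rho_def split: if_splits)
    then show ?thesis using ab eT eE Ae assms A[OF eE(1)] by (auto simp: conn_def)
  qed
qed

lemma lift_path:
  "is_path X' T' (rho X e x) fs w \<Longrightarrow> x \<in> verts X \<Longrightarrow> \<exists>y. rho X e y = w \<and> is_path X T x (lift X e x fs) y"
proof (induction fs arbitrary: x)
  case Nil
  then show ?case by auto
next
  case (Cons f fs)
  then have f: "f \<in> T'" "rho X e (src X f) = rho X e x" "is_path X' T' (rho X e (tgt X f)) fs w"
    by auto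
  have fE: "f \<in> edges X" using f TE by auto
  obtain y where y: "rho X e y = w" "is_path X T (tgt X f) (lift X e (tgt X f) fs) y"
    using Cons.IH[OF f(3)] A[OF fE] by blast
  have "is_path X T x (conn X e x (src X f)) (src X f)"
    using conn_path[OF Cons.prems(2)] A[OF fE] f(2) by simp
  moreover have "is_path X T (src X f) (f # lift X e (tgt X f) fs) y" using y f by simp
  ultimately show ?case using y is_path_append by fastforce
qed

lemma conn_cases: "conn X e x y \<in> {[], [e], [rev X e]}"
  by (simp add: conn_def)

definition R where "R p q = (q \<noteq> rev X p)"

lemma R_E: "p \<in> {e, rev X e} \<Longrightarrow> f \<in> edges X \<Longrightarrow> f \<notin> {e, rev X e} \<Longrightarrow> R p f \<and> R f p"
proof -
  assume p: "p \<in> {e, rev X e}" and fE: "f \<in> edges X" and fn: "f \<notin> {e, rev X e}"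
  have rr: "rev X (rev X e) = e" using A[OF eE(1)] by blast
  have 1: "rev X f \<noteq> e" using rev_eq_iff[OF fE eE(1)] fn by blast
  have 2: "rev X f \<noteq> rev X e" using rev_eq_iff[OF fE eE(3)] fn rr by auto
  show ?thesis unfolding R_def using p fn rr 1 2 by auto
qed

lemma lift_red:
  "f \<in> edges X \<Longrightarrow> f \<notin> {e, rev X e} \<Longrightarrow> set fs \<subseteq> edges X - {e, rev X e} \<Longrightarrow>
   successively R (f # fs) \<Longrightarrow> c \<in> {[], [e], [rev X e]} \<Longrightarrow>
   successively R (f # lift X e (tgt X f) fs @ c)"
proof (induction fs arbitrary: f)
  case Nil
  then show ?case using R_E[of _ f] by auto
next
  case (Cons g gs)
  have IH: "successively R (g # lift X e (tgt X g) gs @ c)"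
    using Cons by auto
  have fg: "R f g" using Cons.prems(4) by simp
  have "g \<in> edges X" "g \<notin> {e, rev X e}" using Cons.prems by auto
  then show ?case using conn_cases[of "tgt X f" "src X g"] IH fg R_E[of _ f] R_E[of _ g] Cons.prems
    by (auto simp: successively_Cons)
qed

lemma st': "spanning_tree X' T'"
  unfolding spanning_tree_def
proof (intro conjI ballI)
  show "T' \<subseteq> edges X'" using TE by auto
next
  fix f assume f: "f \<in> T'"
  then have fE: "f \<in> edges X" using TE by auto
  have "rev X f \<noteq> e" "rev X f \<noteq> rev X e"
    using f rev_eq_iff[OF fE eE(1)] A[OF eE(1)] A[OF fE] by auto
  then show "rev X' f \<in> T'" using f Trev by simp
next
  show "verts X' \<noteq> {}" using A[OF eE(1)] ab by auto
next
  fix u w assume uw: "u \<in> verts X'" "w \<in> verts X'"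
  then have "u \<in> verts X" "w \<in> verts X" by auto
  then obtain es where "is_path X T u es w" using st unfolding spanning_tree_def by blast
  from proj_path[OF this] show "\<exists>es. is_path X' T' u es w" using uw by (auto simp: rho_def)
next
  show "\<not> (\<exists>v es. es \<noteq> [] \<and> is_path X' T' v es v \<and> reduced_path X' es)"
  proof
    assume "\<exists>v es. es \<noteq> [] \<and> is_path X' T' v es v \<and> reduced_path X' es"
    then obtain v es where h: "es \<noteq> []" "is_path X' T' v es v" "reduced_path X' es" by blast
    have v: "v \<in> verts X" "v \<noteq> tgt X e" using is_path_end[OF h(2)] by auto
    then have rv: "rho X e v = v" by (simp add: rho_def)
    obtain y where y: "rho X e y = v" "is_path X T v (lift X e v es) y"
      using lift_path[of v es v] h(2) rv v by auto
    have yv: "y \<in> verts X" using is_path_end[OF y(2)] .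
    have P: "is_path X T v (lift X e v es @ conn X e y v) v"
      using is_path_append[OF y(2) conn_path[OF yv v(1)]] y rv by simp
    obtain f fs where es: "es = f # fs" using h(1) by (cases es) auto
    have sT: "set es \<subseteq> T'"
    proof -
      have "\<And>u. is_path X' T' u es v \<Longrightarrow> set es \<subseteq> T'"
        by (induction es) auto
      then show ?thesis using h(2) by blast
    qed
    then have sE: "set es \<subseteq> edges X - {e, rev X e}" using TE by auto
    have red: "successively R es" using h(3) by (simp add: reduced_path_def R_def)
    have "successively R (f # lift X e (tgt X f) fs @ conn X e y v)"
      using lift_red[of f fs "conn X e y v"] sE red es conn_cases by auto
    moreover have c0: "conn X e v (src X f) \<in> {[], [e], [rev X e]}" by (rule conn_cases)
    ultimately have "successively R (lift X e v es @ conn X e y v)"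
      using es R_E[of _ f] sE by (auto simp: successively_append_iff)
    moreover have "lift X e v es @ conn X e y v \<noteq> []" using es by simp
    ultimately show False using P st unfolding spanning_tree_def reduced_path_def R_def[abs_def]
      by blast
  qed
qed

end



context contr
begin

lemma rho_b[simp]: "rho X e (tgt X e) = src X e" and rho_nb[simp]: "v \<noteq> tgt X e \<Longrightarrow> rho X e v = v"
  by (simp_all add: rho_def)

lemma L:
  assumes y: "y \<in> carrier (vgrp X (tgt X e))"
  shows "fg_eq X T [VL (src X e) (phi X e y)] [VL (tgt X e) y]"
proof -
  obtain z where z: "z \<in> carrier (egrp X e)" "y = emb X e z" using sur y by blast
  have Ae: "src X e \<in> verts X" "tgt X e \<in> verts X" using A[OF eE(1)] by auto
  have r1: "fg_eq X T ([] @ [EL e] @ [VL (tgt X e) y, EL (rev X e)]) ([] @ [] @ [VL (tgt X e) y, EL (rev X e)])"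
    by (rule fg_eq.rel) (use eT eE Ae y in \<open>auto intro: fg_rel.etree\<close>)
  have r2: "fg_eq X T ([VL (tgt X e) y] @ [EL (rev X e)] @ []) ([VL (tgt X e) y] @ [] @ [])"
    by (rule fg_eq.rel) (use eT eE Ae y in \<open>auto intro: fg_rel.etree\<close>)
  have r3: "fg_eq X T [EL e, VL (tgt X e) y, EL (rev X e)] [VL (src X e) (phi X e y)]"
    using fg_rel_eq[OF fg_rel.econj[OF eE(1) z(1)]] z phi_emb by simp
  show ?thesis using r1 r2 r3 by (auto intro: fg_eq.trans fg_eq.sym)
qed

lemma M:
  assumes "v \<in> verts X" "g \<in> carrier (vgrp X v)"
  shows "fg_eq X T [VL (rho X e v) (if v = tgt X e then phi X e g else g)] [VL v g]"
proof (cases "v = tgt X e")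
  case True
  then show ?thesis using L assms by simp
next
  case False
  then show ?thesis using assms by (simp add: fg_eq.refl)
qed

lemma valid_X'X: "valid_word X' w \<Longrightarrow> valid_word X w"
proof (induction w)
  case (Cons l w)
  then show ?case by (cases l) auto
qed simp

lemma projl_VL: "projl X e (VL v g) = [VL (rho X e v) (if v = tgt X e then phi X e g else g)]"
  by (simp add: rho_def)

lemma valid_proj: "valid_word X w \<Longrightarrow> valid_word X' (projw X e w)"
proof (induction w)
  case (Cons l w)
  then show ?case
  proof (cases l)
    case (VL v g)
    have sv: "src X e \<in> verts X'" using A[OF eE(1)] ab by simp
    show ?thesis
    proof (cases "v = tgt X e")
      case True
      then show ?thesis using Cons VL sv phi_closed by simp
    next
      case False
      then show ?thesis using Cons VL by simp
    qed
  qed auto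
qed simp

lemma TE': "T' \<subseteq> edges X'" using TE by auto

lemma Fr: "fg_eq X' T' a b \<Longrightarrow> fg_eq X T a b"
proof -
  assume h: "fg_eq X' T' a b"
  have "fg_eq X T (id a) (id b)"
  proof (rule fg_eq_respects[where F=id and Y=X and T'=T, OF _ _ _ gog' TE' h])
    fix a b assume r: "fg_rel X' T' a b"
    show "fg_eq X T (id a) (id b)"
      using r
    proof cases
      case (vmult v g h)
      then show ?thesis by (auto intro!: fg_rel_eq fg_rel.vmult)
    next
      case (vone v)
      then show ?thesis by (auto intro!: fg_rel_eq fg_rel.vone)
    next
      case (einv f)
      then show ?thesis by (auto intro!: fg_rel_eq fg_rel.einv)
    next
      case (etree f)
      then show ?thesis by (auto intro!: fg_rel_eq fg_rel.etree)
    next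
      case (econj f x)
      then have fE: "f \<in> edges X" and x: "x \<in> carrier (egrp X f)" by auto
      note Af = A[OF fE]
      have tr: "tgt X (rev X f) = src X f" using Af by blast
      have xr: "x \<in> carrier (egrp X (rev X f))" using Af x by simp
      have c1: "emb X f x \<in> carrier (vgrp X (tgt X f))" using Af x by (auto simp: hom_def)
      have c2: "emb X (rev X f) x \<in> carrier (vgrp X (src X f))"
        using A[of "rev X f"] Af xr by (auto simp: hom_def)
      have q1: "emb X' f x = (if tgt X f = tgt X e then phi X e (emb X f x) else emb X f x)" by simp
      have q2: "emb X' (rev X f) x = (if src X f = tgt X e then phi X e (emb X (rev X f) x) else emb X (rev X f) x)"
        using tr by simp
      have m1: "fg_eq X T [VL (rho X e (tgt X f)) (emb X' f x)] [VL (tgt X f) (emb X f x)]"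
        unfolding q1 by (rule M) (use Af c1 in auto)
      have m2: "fg_eq X T [VL (rho X e (src X f)) (emb X' (rev X f) x)] [VL (src X f) (emb X (rev X f) x)]"
        unfolding q2 by (rule M) (use Af c2 in auto)
      have F1: "fg_eq X T ([EL f] @ [VL (rho X e (tgt X f)) (emb X' f x)] @ [EL (rev X f)])
          ([EL f] @ [VL (tgt X f) (emb X f x)] @ [EL (rev X f)])"
        by (rule fg_eq_cong[OF m1]) (use Af fE in auto)
      have F2: "fg_eq X T [EL f, VL (tgt X f) (emb X f x), EL (rev X f)] [VL (src X f) (emb X (rev X f) x)]"
        by (rule fg_rel_eq[OF fg_rel.econj[OF fE x]])
      have "fg_eq X T [EL f, VL (rho X e (tgt X f)) (emb X' f x), EL (rev X f)] [VL (rho X e (src X f)) (emb X' (rev X f) x)]"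
        using fg_eq.trans[OF fg_eq.trans[OF F1[simplified append.simps] F2] fg_eq.sym[OF m2]] by simp
      then show ?thesis using econj by (simp only: contract_simps(3,4,5) id_apply)
    qed
  qed (simp_all add: valid_X'X)
  then show ?thesis by simp
qed

lemma Gr: "fg_eq X T a b \<Longrightarrow> fg_eq X' T' (projw X e a) (projw X e b)"
proof -
  assume h: "fg_eq X T a b"
  show ?thesis
  proof (rule fg_eq_respects[OF _ valid_proj _ gog TE h])
    fix a b assume r: "fg_rel X T a b" and va: "valid_word X a" and vb: "valid_word X b"
    have reflX': "\<And>w. valid_word X w \<Longrightarrow> fg_eq X' T' (projw X e w) (projw X e w)"
      by (intro fg_eq.refl valid_proj)
    show "fg_eq X' T' (projw X e a) (projw X e b)"
      using r
    proof cases
      case (vmult v g h)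
      show ?thesis
      proof (cases "v = tgt X e")
        case True
        have "phi X e (g \<otimes>\<^bsub>vgrp X v\<^esub> h) = phi X e g \<otimes>\<^bsub>vgrp X (src X e)\<^esub> phi X e h"
          using phi_hom vmult True by (simp add: hom_mult)
        moreover have "src X e \<in> verts X'" using A[OF eE(1)] ab by simp
        ultimately show ?thesis using vmult True phi_closed
          by (auto intro!: fg_rel_eq fg_rel.vmult[of "src X e" X', simplified])
      next
        case False
        then show ?thesis using vmult by (auto intro!: fg_rel_eq fg_rel.vmult[of v X', simplified])
      qed
    next
      case (vone v)
      show ?thesis
      proof (cases "v = tgt X e")
        case True
        have "phi X e \<one>\<^bsub>vgrp X v\<^esub> = \<one>\<^bsub>vgrp X (src X e)\<^esub>"
          using group_hom.hom_one[of "vgrp X (tgt X e)" "vgrp X (src X e)" "phi X e"]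
            phi_hom VG A[OF eE(1)] True by (simp add: group_hom_def group_hom_axioms_def)
        moreover have "src X e \<in> verts X'" using A[OF eE(1)] ab by simp
        ultimately show ?thesis using vone True
          by (auto intro!: fg_rel_eq fg_rel.vone[of "src X e" X', simplified])
      next
        case False
        then show ?thesis using vone by (auto intro!: fg_rel_eq fg_rel.vone[of v X', simplified])
      qed
    next
      case (einv f)
      note Af = A[OF einv(3)]
      show ?thesis
      proof (cases "f = e \<or> f = rev X e")
        case True
        then have "rev X f = e \<or> rev X f = rev X e" using A[OF eE(1)] by auto
        then show ?thesis using einv True by (auto intro: fg_eq.refl)
      next
        case False
        then have "rev X f \<noteq> e" "rev X f \<noteq> rev X e"
          using rev_eq_iff[OF einv(3) eE(1)] A[OF eE(1)] Af by auto
        then show ?thesis using einv False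
          by (auto intro!: fg_rel_eq fg_rel.einv[of f X', simplified])
      qed
    next
      case (etree f)
      show ?thesis
      proof (cases "f = e \<or> f = rev X e")
        case True
        then show ?thesis using etree by (auto intro: fg_eq.refl)
      next
        case False
        then show ?thesis using etree by (auto intro!: fg_rel_eq fg_rel.etree[of f T', simplified])
      qed
    next
      case (econj f x)
      then have fE: "f \<in> edges X" and x: "x \<in> carrier (egrp X f)" by auto
      note Af = A[OF fE]
      have tr: "tgt X (rev X f) = src X f" using Af by blast
      have Ae: "tgt X (rev X e) = src X e" "src X (rev X e) = tgt X e" "rev X (rev X e) = e"
        "egrp X (rev X e) = egrp X e"
        using A[OF eE(1)] src_rev[OF eE(1)] by auto
      show ?thesis
      proof (cases "f = e")
        case True
        have "phi X e (emb X e x) = emb X (rev X e) x" using phi_emb x True by simp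
        moreover have "emb X (rev X e) x \<in> carrier (vgrp X (src X e))"
          using emb_rev_hom x True by (auto simp: hom_def)
        ultimately show ?thesis using econj True ab Ae A[OF eE(1)]
          by (auto intro!: fg_eq.refl)
      next
        case False
        show ?thesis
        proof (cases "f = rev X e")
          case True
          have xe: "x \<in> carrier (egrp X e)" using x True Ae by simp
          have "phi X e (emb X e x) = emb X (rev X e) x" using phi_emb xe by simp
          moreover have "emb X (rev X e) x \<in> carrier (vgrp X (src X e))"
            using emb_rev_hom xe by (auto simp: hom_def)
          ultimately show ?thesis using econj True ab Ae A[OF eE(1)]
            by (auto intro!: fg_eq.refl)
        next
          case False2: False
          have nr: "rev X f \<noteq> e" "rev X f \<noteq> rev X e"
            using rev_eq_iff[OF fE eE(1)] A[OF eE(1)] Af False False2 by auto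
          have fE': "f \<in> edges X'" using fE False False2 by simp
          have "fg_rel X' T' [EL f, VL (tgt X' f) (emb X' f x), EL (rev X' f)]
                  [VL (src X' f) (emb X' (rev X' f) x)]"
            by (rule fg_rel.econj[OF fE']) (use x in simp)
          then have "fg_eq X' T' [EL f, VL (tgt X' f) (emb X' f x), EL (rev X' f)]
                  [VL (src X' f) (emb X' (rev X' f) x)]" by (rule fg_rel_eq)
          moreover have e1: "projw X e [EL f, VL (tgt X f) (emb X f x), EL (rev X f)] = [EL f, VL (tgt X' f) (emb X' f x), EL (rev X' f)]"
            using False False2 nr by (cases "tgt X f = tgt X e") simp_all
          moreover have e2: "projw X e [VL (src X f) (emb X (rev X f) x)] = [VL (src X' f) (emb X' (rev X' f) x)]"
            using tr by (cases "src X f = tgt X e") simp_all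
          ultimately show ?thesis using econj by simp
        qed
      qed
    qed
  qed simp
qed

lemma proj_id: "valid_word X' w \<Longrightarrow> projw X e w = w"
proof (induction w)
  case (Cons l w)
  then show ?case by (cases l) auto
qed simp

lemma proj_back: "valid_word X w \<Longrightarrow> fg_eq X T (projw X e w) w"
proof (induction w)
  case Nil
  then show ?case by (simp add: fg_eq.refl)
next
  case (Cons l w)
  have "fg_eq X T (projl X e l) [l]"
  proof (cases l)
    case (VL v g)
    have vg: "v \<in> verts X" "g \<in> carrier (vgrp X v)" using Cons.prems VL by auto
    have "projl X e (VL v g) = [VL (rho X e v) (if v = tgt X e then phi X e g else g)]"
      by (cases "v = tgt X e") simp_all
    then show ?thesis using M[OF vg] VL by simp
  next
    case (EL f)
    show ?thesis
    proof (cases "f = e \<or> f = rev X e")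
      case True
      then have "fg_eq X T [EL f] []" using eT eE by (auto intro!: fg_rel_eq fg_rel.etree)
      then show ?thesis using EL True by (auto intro: fg_eq.sym)
    next
      case False
      then show ?thesis using EL Cons.prems by (auto intro: fg_eq.refl)
    qed
  qed
  then show ?case using fg_eq_append[OF gog TE _ Cons.IH, of "projl X e l" "[l]"] Cons.prems by simp
qed

lemma iso_contract: "fund_group X' T' \<cong> fund_group X T"
  by (rule fund_iso[OF gog' TE' gog TE, of id "projw X e"])
     (auto simp: valid_X'X Fr valid_proj Gr proj_id proj_back fg_eq.refl)

lemma card_less: "finite (verts X) \<Longrightarrow> card (verts X') < card (verts X)"
proof -
  assume fin: "finite (verts X)"
  have "verts X' = verts X - {tgt X e}" by simp
  moreover have "tgt X e \<in> verts X" using A[OF eE(1)] by blast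
  ultimately show ?thesis using card_Diff1_less[OF fin] by metis
qed

end



definition good where
  "good Y T \<longleftrightarrow> (\<forall>e\<in>T. emb Y e ` carrier (egrp Y e) \<noteq> carrier (vgrp Y (tgt Y e)) \<and>
                   emb Y (rev Y e) ` carrier (egrp Y e) \<noteq> carrier (vgrp Y (src Y e)))"

lemma main:
  fixes X :: "('v, 'e, 'g) graph_of_groups"
  shows "finite (verts X) \<Longrightarrow> is_graph_of_groups X \<Longrightarrow> spanning_tree X T0 \<Longrightarrow>
    \<exists>(Y :: ('v, 'e, 'g) graph_of_groups) T.
           is_graph_of_groups Y \<and> finite (verts Y) \<and> spanning_tree Y T \<and>
           fund_group Y T \<cong> fund_group X T0 \<and> good Y T \<and>
           (F1 X \<longrightarrow> F1 Y) \<and> (F2 X \<longrightarrow> F2 Y)"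
proof (induction "card (verts X)" arbitrary: X T0 rule: less_induct)
  case less
  show ?case
  proof (cases "good X T0")
    case True
    then show ?thesis using less.prems iso_refl[of "fund_group X T0"] by blast
  next
    case False
    then obtain e0 where e0: "e0 \<in> T0" and
      ns: "emb X e0 ` carrier (egrp X e0) = carrier (vgrp X (tgt X e0)) \<or>
           emb X (rev X e0) ` carrier (egrp X e0) = carrier (vgrp X (src X e0))"
      unfolding good_def by blast
    have TE: "T0 \<subseteq> edges X" "\<And>f. f \<in> T0 \<Longrightarrow> rev X f \<in> T0"
      using less.prems(3) unfolding spanning_tree_def by auto
    have Ae0: "egrp X (rev X e0) = egrp X e0" "tgt X (rev X e0) = src X e0"
      using less.prems(2) e0 TE unfolding is_graph_of_groups_def by auto
    obtain e where e: "e \<in> T0" "emb X e ` carrier (egrp X e) = carrier (vgrp X (tgt X e))"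
      using ns e0 TE(2)[OF e0] Ae0 by metis
    interpret C: contr X T0 e
      by unfold_locales (use less.prems e in auto)
    have lt: "card (verts C.X') < card (verts X)" using C.card_less less.prems(1) .
    have fin': "finite (verts C.X')" using less.prems(1) by simp
    obtain Y :: "('v, 'e, 'g) graph_of_groups" and T where Y: "is_graph_of_groups Y" "finite (verts Y)" "spanning_tree Y T"
        "fund_group Y T \<cong> fund_group C.X' C.T'" "good Y T"
        "F1 C.X' \<longrightarrow> F1 Y" "F2 C.X' \<longrightarrow> F2 Y"
      using less.hyps[OF lt fin' C.gog' C.st'] by blast
    have "fund_group Y T \<cong> fund_group X T0" using iso_trans[OF Y(4) C.iso_contract] .
    moreover have "F1 X \<longrightarrow> F1 C.X'" "F2 X \<longrightarrow> F2 C.X'" by (auto simp: F1_def F2_def)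
    ultimately show ?thesis using Y by blast
  qed
qed

theorem lemma3p1:
  fixes X :: "('v, 'e, 'g) graph_of_groups" and T0 :: "'e set"
  assumes "is_graph_of_groups X"
    and "connected_gog X"
    and "finite (verts X)"
    and "spanning_tree X T0"
  shows "\<exists>(Y :: ('v, 'e, 'g) graph_of_groups) T.
           is_graph_of_groups Y \<and> finite (verts Y) \<and> spanning_tree Y T \<and>
           fund_group Y T \<cong> fund_group X T0 \<and>
           (\<forall>e\<in>T. emb Y e ` carrier (egrp Y e) \<noteq> carrier (vgrp Y (tgt Y e)) \<and>
                   emb Y (rev Y e) ` carrier (egrp Y e) \<noteq> carrier (vgrp Y (src Y e))) \<and>
           (F1 X \<longrightarrow> F1 Y) \<and> (F2 X \<longrightarrow> F2 Y)"
  using main[OF assms(3,1,4)] unfolding good_def by blast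

end
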